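(* Every simple $W^2$-module is isomorphic to one of the following: (1) $V(s_1,s_2)$ or $\Pi V(s_1,s_2)$ with $s_1\neq -s_2$ and $s_1,s_2\neq0$; (2) $V(s,0)$ with $s\neq0$; (3) $\Gamma_t$ or $\Pi\Gamma_t$ with $t\in\mathbb C$.
   Context: $U(\mathfrak h_2)$ is the superalgebra generated by odd $\xi_1,\xi_2$ with $\xi_1\xi_2+\xi_2\xi_1=0$, $x_i=\xi_i^2$; it is the enveloping algebra of the Cartan subalgebra of $Q(2)$. $W^2\subset U(\mathfrak h_2)$ is the principal finite $W$-algebra of $Q(2)$ realized via the injective Harish-Chandra homomorphism; it is generated by $\phi_0=\xi_1+\xi_2$, $\phi_1=x_2\xi_1-x_1\xi_2$, $z_0=x_1+x_2$, $z_1'=x_1x_2-\xi_1\xi_2$. For $\mathbf s\in\mathbb C^2$, $V(\mathbf s)$ is a simple $\mathbb Z_2$-graded $U(\mathfrak h_2)$-module with $x_i$ acting by $s_i$ (unique up to isomorphism and parity change), restricted to $W^2$. For $t\in\mathbb C$, $\Gamma_t$ is the $(1|0)$-dimensional $W^2$-module on which $\phi_0,\phi_1,z_0$ act by $0$ and $z_1'$ acts by $t$. *)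

theory Defs
  imports Main "HOL-Computational_Algebra.Polynomial"
begin

text \<open>Coefficient ring C[x1,x2], realised as complex poly poly
  (outer variable x2, inner variable x1).\<close>

definition px1 :: "complex poly poly" where "px1 = [:[:0, 1:]:]"
definition px2 :: "complex poly poly" where "px2 = [:0, 1:]"

text \<open>By PBW, U(h_2) is the free C[x1,x2]-module with basis 1, xi1, xi2, xi1 xi2,
  where x_i = xi_i^2 is central.  Uel a b c d represents a + b xi1 + c xi2 + d xi1 xi2.\<close>

datatype U = Uel "complex poly poly" "complex poly poly" "complex poly poly" "complex poly poly"

fun U_add :: "U \<Rightarrow> U \<Rightarrow> U" where
  "U_add (Uel a b c d) (Uel a' b' c' d') = Uel (a + a') (b + b') (c + c') (d + d')"

fun U_smul :: "complex \<Rightarrow> U \<Rightarrow> U" where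
  "U_smul k (Uel a b c d) = Uel (smult [:k:] a) (smult [:k:] b) (smult [:k:] c) (smult [:k:] d)"

definition U_neg :: "U \<Rightarrow> U" where "U_neg u = U_smul (-1) u"

text \<open>Multiplication, from xi1^2 = x1, xi2^2 = x2, xi1 xi2 + xi2 xi1 = 0.\<close>
fun U_mult :: "U \<Rightarrow> U \<Rightarrow> U" where
  "U_mult (Uel a b c d) (Uel a' b' c' d') =
     Uel (a * a' + px1 * b * b' + px2 * c * c' - px1 * px2 * d * d')
         (a * b' + b * a' - px2 * c * d' + px2 * d * c')
         (a * c' + c * a' + px1 * b * d' - px1 * d * b')
         (a * d' + d * a' + b * c' - c * b')"

definition U_one :: U where "U_one = Uel 1 0 0 0"
definition xi1 :: U where "xi1 = Uel 0 1 0 0"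
definition xi2 :: U where "xi2 = Uel 0 0 1 0"
definition x1 :: U where "x1 = U_mult xi1 xi1"
definition x2 :: U where "x2 = U_mult xi2 xi2"

fun U_even :: "U \<Rightarrow> bool" where "U_even (Uel a b c d) = (b = 0 \<and> c = 0)"
fun U_odd :: "U \<Rightarrow> bool" where "U_odd (Uel a b c d) = (a = 0 \<and> d = 0)"

definition phi0 :: U where "phi0 = U_add xi1 xi2"
definition phi1 :: U where "phi1 = U_add (U_mult x2 xi1) (U_neg (U_mult x1 xi2))"
definition z0 :: U where "z0 = U_add x1 x2"
definition z1' :: U where "z1' = U_add (U_mult x1 x2) (U_neg (U_mult xi1 xi2))"

inductive_set W2 :: "U set" where
  W2_one: "U_one \<in> W2"
| W2_phi0: "phi0 \<in> W2"
| W2_phi1: "phi1 \<in> W2"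
| W2_z0: "z0 \<in> W2"
| W2_z1': "z1' \<in> W2"
| W2_add: "u \<in> W2 \<Longrightarrow> v \<in> W2 \<Longrightarrow> U_add u v \<in> W2"
| W2_smul: "u \<in> W2 \<Longrightarrow> U_smul k u \<in> W2"
| W2_mult: "u \<in> W2 \<Longrightarrow> v \<in> W2 \<Longrightarrow> U_mult u v \<in> W2"

text \<open>The underlying complex vector space is the whole type 'v with scalar
  multiplication sc; V0, V1 are the even and odd parts.\<close>

definition grading :: "(complex \<Rightarrow> 'v::ab_group_add \<Rightarrow> 'v) \<Rightarrow> 'v set \<Rightarrow> 'v set \<Rightarrow> bool" where
  "grading sc V0 V1 \<longleftrightarrow> module.subspace sc V0 \<and> module.subspace sc V1 \<and>
     V0 \<inter> V1 = {0} \<and> (\<forall>x. \<exists>a\<in>V0. \<exists>b\<in>V1. x = a + b)"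

definition graded_module ::
  "U set \<Rightarrow> (complex \<Rightarrow> 'v::ab_group_add \<Rightarrow> 'v) \<Rightarrow> 'v set \<Rightarrow> 'v set \<Rightarrow> (U \<Rightarrow> 'v \<Rightarrow> 'v) \<Rightarrow> bool" where
  "graded_module A sc V0 V1 act \<longleftrightarrow>
     vector_space sc \<and> grading sc V0 V1 \<and>
     (\<forall>u\<in>A. Vector_Spaces.linear sc sc (act u)) \<and>
     (\<forall>u\<in>A. \<forall>v\<in>A. act (U_add u v) = (\<lambda>x. act u x + act v x)) \<and>
     (\<forall>k. \<forall>u\<in>A. act (U_smul k u) = (\<lambda>x. sc k (act u x))) \<and>
     (\<forall>u\<in>A. \<forall>v\<in>A. act (U_mult u v) = act u \<circ> act v) \<and>
     act U_one = id \<and>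
     (\<forall>u\<in>A. U_even u \<longrightarrow> act u ` V0 \<subseteq> V0 \<and> act u ` V1 \<subseteq> V1) \<and>
     (\<forall>u\<in>A. U_odd u \<longrightarrow> act u ` V0 \<subseteq> V1 \<and> act u ` V1 \<subseteq> V0)"

definition graded_submodule ::
  "U set \<Rightarrow> (complex \<Rightarrow> 'v::ab_group_add \<Rightarrow> 'v) \<Rightarrow> 'v set \<Rightarrow> 'v set \<Rightarrow> (U \<Rightarrow> 'v \<Rightarrow> 'v) \<Rightarrow> 'v set \<Rightarrow> bool" where
  "graded_submodule A sc V0 V1 act S \<longleftrightarrow>
     module.subspace sc S \<and> (\<forall>u\<in>A. act u ` S \<subseteq> S) \<and>
     (\<forall>x\<in>S. \<exists>a\<in>S \<inter> V0. \<exists>b\<in>S \<inter> V1. x = a + b)"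

definition simple_module ::
  "U set \<Rightarrow> (complex \<Rightarrow> 'v::ab_group_add \<Rightarrow> 'v) \<Rightarrow> 'v set \<Rightarrow> 'v set \<Rightarrow> (U \<Rightarrow> 'v \<Rightarrow> 'v) \<Rightarrow> bool" where
  "simple_module A sc V0 V1 act \<longleftrightarrow>
     graded_module A sc V0 V1 act \<and> (\<exists>x::'v. x \<noteq> 0) \<and>
     (\<forall>S. graded_submodule A sc V0 V1 act S \<longrightarrow> S = {0} \<or> S = UNIV)"

definition module_iso ::
  "U set \<Rightarrow> (complex \<Rightarrow> 'v::ab_group_add \<Rightarrow> 'v) \<Rightarrow> 'v set \<Rightarrow> 'v set \<Rightarrow> (U \<Rightarrow> 'v \<Rightarrow> 'v)
   \<Rightarrow> (complex \<Rightarrow> 'w::ab_group_add \<Rightarrow> 'w) \<Rightarrow> 'w set \<Rightarrow> 'w set \<Rightarrow> (U \<Rightarrow> 'w \<Rightarrow> 'w) \<Rightarrow> bool" where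
  "module_iso A sc V0 V1 act sc' W0 W1 act' \<longleftrightarrow>
     (\<exists>f. bij f \<and> Vector_Spaces.linear sc sc' f \<and> f ` V0 = W0 \<and> f ` V1 = W1 \<and>
          (\<forall>u\<in>A. \<forall>x. f (act u x) = act' u (f x)))"

end

theory Submission
  imports Defs "HOL-Analysis.Continuum_Not_Denumerable" "HOL-Computational_Algebra.Fundamental_Theorem_Algebra"
begin

lemma pm1: "[:- 1:] = (- 1 :: complex poly)" by (simp add: one_pCons)
lemma sm_m1[simp]: "smult [:- 1:] (p::complex poly poly) = - p"
  by (simp add: pm1)
lemma phi0_eq: "phi0 = Uel 0 1 1 0" by (simp add: phi0_def xi1_def xi2_def)
lemma phi1_eq: "phi1 = Uel 0 px2 (-px1) 0"
  by (simp add: phi1_def xi1_def xi2_def x1_def x2_def U_neg_def)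
lemma z0_eq: "z0 = Uel (px1+px2) 0 0 0" by (simp add: z0_def xi1_def xi2_def x1_def x2_def)
lemma z1'_eq: "z1' = Uel (px1*px2) 0 0 (-1)"
  unfolding z1'_def xi1_def xi2_def x1_def x2_def U_neg_def 
  by (simp only: U_mult.simps U_add.simps U_smul.simps sm_m1) simp
lemma x1_eq: "x1 = Uel px1 0 0 0" by (simp add: xi1_def x1_def)
lemma x2_eq: "x2 = Uel px2 0 0 0" by (simp add: xi2_def x2_def)

definition Qc :: U where "Qc = Uel (px1*px2*(px1+px2)) 0 0 0"

lemmas Ueqs = phi0_eq phi1_eq z0_eq z1'_eq Qc_def U_one_def

lemma Qc_W2: "U_add (U_mult z0 z1') (U_mult phi1 phi0) = Qc"
  by (simp add: Ueqs algebra_simps)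
lemma phi0_sq: "U_mult phi0 phi0 = z0" by (simp add: Ueqs algebra_simps)
lemma phi1_sq: "U_mult phi1 phi1 = Qc" by (simp add: Ueqs algebra_simps)
lemma phi_anti: "U_add (U_mult phi0 phi1) (U_mult phi1 phi0) = U_smul 0 U_one"
  by (simp add: Ueqs algebra_simps)
lemma y_phi0: "U_mult phi0 z1' = U_add (U_mult z1' phi0) (U_add phi1 phi1)"
  by (simp add: Ueqs algebra_simps)
lemma y_phi1: "U_mult z1' phi1 = U_add (U_mult phi1 z1') (U_add (U_add (U_mult z1' phi0) (U_mult z1' phi0)) (U_add phi1 phi1))"
  by (simp add: Ueqs algebra_simps)
lemma z0_central: "U_mult z0 u = U_mult u z0"
  by (cases u) (simp add: Ueqs algebra_simps)
lemma Qc_central: "U_mult Qc u = U_mult u Qc"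
  by (cases u) (simp add: Ueqs algebra_simps)


locale cvs = vector_space sc for sc :: "complex \<Rightarrow> 'v::ab_group_add \<Rightarrow> 'v"
begin

lemma lin_add: "Vector_Spaces.linear sc sc T \<Longrightarrow> T (x + y) = T x + T y"
  by (simp add: Vector_Spaces.linear_iff)
lemma lin_scale: "Vector_Spaces.linear sc sc T \<Longrightarrow> T (sc c x) = sc c (T x)"
  by (simp add: Vector_Spaces.linear_iff)
lemma lin_0: "Vector_Spaces.linear sc sc T \<Longrightarrow> T 0 = 0"
  by (metis add_cancel_right_right lin_add)
lemma lin_neg: "Vector_Spaces.linear sc sc T \<Longrightarrow> T (- x) = - T x"
  by (metis add_eq_0_iff lin_0 lin_add)
lemma lin_diff: "Vector_Spaces.linear sc sc T \<Longrightarrow> T (x - y) = T x - T y"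
  by (metis diff_conv_add_uminus lin_add lin_neg)
lemma lin_sum: "Vector_Spaces.linear sc sc T \<Longrightarrow> T (sum f A) = (\<Sum>a\<in>A. T (f a))"
  by (induct A rule: infinite_finite_induct) (auto simp: lin_0 lin_add)

definition pe :: "('v \<Rightarrow> 'v) \<Rightarrow> complex poly \<Rightarrow> 'v \<Rightarrow> 'v" where
  "pe T p = fold_coeffs (\<lambda>a g y. sc a y + T (g y)) p (\<lambda>y. 0)"

lemma pe_0[simp]: "pe T 0 y = 0" by (simp add: pe_def)

lemma pe_pCons: "Vector_Spaces.linear sc sc T \<Longrightarrow> pe T (pCons a p) y = sc a y + T (pe T p y)"
  apply (cases "p = 0 \<and> a = 0")
   apply (simp add: pe_def lin_0)
  apply (cases "p = 0")
   apply (simp_all add: pe_def)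
  done

lemma pe_vec_add: "Vector_Spaces.linear sc sc T \<Longrightarrow> pe T p (y + z) = pe T p y + pe T p z"
  by (induct p) (simp_all add: pe_pCons lin_add scale_right_distrib algebra_simps)

lemma pe_vec_scale: "Vector_Spaces.linear sc sc T \<Longrightarrow> pe T p (sc c y) = sc c (pe T p y)"
  by (induct p) (simp_all add: pe_pCons lin_scale scale_right_distrib mult.commute)

lemma pe_linear: "Vector_Spaces.linear sc sc T \<Longrightarrow> Vector_Spaces.linear sc sc (pe T p)"
  by (simp add: Vector_Spaces.linear_iff pe_vec_add pe_vec_scale vector_space_axioms)

lemma pe_add: "Vector_Spaces.linear sc sc T \<Longrightarrow> pe T (p + q) y = pe T p y + pe T q y"
proof (induct p arbitrary: q)
  case 0 then show ?case by simp
next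
  case (pCons a p)
  obtain b q' where qq: "q = pCons b q'" by (cases q)
  show ?case using pCons.prems pCons.hyps(2)[of q'] unfolding qq
    by (simp add: pe_pCons lin_add scale_left_distrib algebra_simps)
qed

lemma pe_smult: "Vector_Spaces.linear sc sc T \<Longrightarrow> pe T (smult c p) y = sc c (pe T p y)"
  by (induct p) (simp_all add: pe_pCons lin_scale scale_right_distrib mult.commute)

lemma pe_mult: "Vector_Spaces.linear sc sc T \<Longrightarrow> pe T (p * q) y = pe T p (pe T q y)"
  by (induct p) (simp_all add: pe_pCons pe_add pe_smult)

lemma pe_sum: "Vector_Spaces.linear sc sc T \<Longrightarrow> pe T (sum f A) y = (\<Sum>a\<in>A. pe T (f a) y)"
  by (induct A rule: infinite_finite_induct) (auto simp: pe_add)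

lemma pe_lin1: "Vector_Spaces.linear sc sc T \<Longrightarrow> pe T [:- c, 1:] y = T y - sc c y"
  by (simp add: pe_pCons lin_0)

lemma pe_inj:
  assumes T: "Vector_Spaces.linear sc sc T" and inj: "\<And>c. inj (\<lambda>x. T x - sc c x)"
  shows "p \<noteq> 0 \<Longrightarrow> pe T p y = 0 \<Longrightarrow> y = 0"
proof (induct "degree p" arbitrary: p y rule: less_induct)
  case less
  show ?case
  proof (cases "\<exists>a l. a \<noteq> 0 \<and> l = 0 \<and> p = pCons a l")
    case True
    then obtain a where "a \<noteq> 0" "p = pCons a 0" by auto
    with less show ?thesis by (simp add: pe_pCons[OF T] lin_0[OF T])
  next
    case False
    then obtain r where "poly p r = 0" using fundamental_theorem_of_algebra_alt by blast
    then obtain q where pq: "p = [:- r, 1:] * q" using poly_eq_0_iff_dvd by (metis dvdE)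
    with less have q0: "q \<noteq> 0" by auto
    have "degree p = degree [:- r, 1:] + degree q" unfolding pq using q0 by (intro degree_mult_eq) auto
    then have dq: "degree q < degree p" by simp
    have "pe T [:- r, 1:] (pe T q y) = 0" by (metis less(3) pq pe_mult[OF T])
    then have "(\<lambda>x. T x - sc r x) (pe T q y) = (\<lambda>x. T x - sc r x) 0"
      by (simp add: pe_lin1[OF T] lin_0[OF T])
    then have "pe T q y = 0" using inj[of r] by (rule injD[rotated])
    then show ?thesis using less(1)[OF dq q0] by blast
  qed
qed

lemma indep_countable:
  assumes ind: "independent S" and sp: "S \<subseteq> span B" and cB: "countable B"
  shows "countable S"
proof (cases "B = {}")
  case True
  then have "S \<subseteq> {0}" using sp by simp
  then show ?thesis using countable_subset by blast
next
  case False
  define b where "b = from_nat_into B"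
  have Bb: "B = range b" using False cB by (simp add: b_def)
  have "S \<subseteq> (\<Union>n. S \<inter> span (b ` {..<n}))"
  proof
    fix s assume sS: "s \<in> S"
    then have "s \<in> span B" using sp by auto
    then obtain t r where t: "finite t" "t \<subseteq> B" "s = (\<Sum>a\<in>t. sc (r a) a)"
      unfolding span_explicit by blast
    define I where "I = (\<lambda>a. SOME i. b i = a) ` t"
    have "finite I" using t by (simp add: I_def)
    then obtain n where n: "\<forall>i\<in>I. i < n" using finite_nat_iff_bounded by auto
    have "t \<subseteq> b ` {..<n}"
    proof
      fix a assume "a \<in> t"
      then have "a \<in> range b" using t Bb by auto
      then have ba: "b (SOME i. b i = a) = a" by (metis (mono_tags) rangeE someI)
      have "(SOME i. b i = a) < n" using n \<open>a \<in> t\<close> by (auto simp: I_def)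
      then show "a \<in> b ` {..<n}" using ba by (metis imageI lessThan_iff)
    qed
    then have "s \<in> span (b ` {..<n})" using t
      by (metis (no_types, lifting) span_mono span_scale span_sum span_superset subset_iff)
    then show "s \<in> (\<Union>n. S \<inter> span (b ` {..<n}))" using sS by blast
  qed
  moreover have "finite (S \<inter> span (b ` {..<n}))" for n
    using independent_span_bound[of "b ` {..<n}" "S \<inter> span (b ` {..<n})"]
      independent_mono[OF ind] by auto
  ultimately show ?thesis by (meson countable_UN countable_finite countable_subset UNIV_I countableI_type)
qed

lemma dixmier:
  assumes cB: "countable B" and spB: "span B = UNIV" and T: "Vector_Spaces.linear sc sc T"
    and bij: "\<And>c. bij (\<lambda>x. T x - sc c x)" and x0: "(x::'v) \<noteq> 0"
  shows False
proof -
  define D where "D c = (\<lambda>x. T x - sc c x)" for c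
  define F where "F c = inv (D c) x" for c
  have DF: "D c (F c) = x" for c unfolding F_def D_def by (rule surj_f_inv_f[OF bij_is_surj[OF bij[of c]]])
  have inj: "\<And>c. inj (\<lambda>x. T x - sc c x)" using bij bij_is_inj by blast
  define \<pi> where "\<pi> L = (\<Prod>\<mu>\<in>L. [:- \<mu>, 1:])" for L :: "complex set"
  have key: "\<forall>c\<in>L. a c = 0" if L: "finite L" and s: "(\<Sum>c\<in>L. sc (a c) (F c)) = 0" for L a
  proof
    fix c0 assume c0: "c0 \<in> L"
    have piF: "pe T (\<pi> L) (F c) = pe T (\<pi> (L - {c})) x" if "c \<in> L" for c
    proof -
      have "\<pi> L = \<pi> (L - {c}) * [:- c, 1:]" unfolding \<pi>_def
        using prod.remove[OF L that, of "\<lambda>\<mu>. [:- \<mu>, 1:]"] by (simp only: mult.commute)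
      then have "pe T (\<pi> L) (F c) = pe T (\<pi> (L - {c})) (pe T [:- c, 1:] (F c))"
        by (simp only: pe_mult[OF T])
      also have "\<dots> = pe T (\<pi> (L - {c})) x" using DF[of c] by (simp only: pe_lin1[OF T] D_def)
      finally show ?thesis .
    qed
    define q where "q = (\<Sum>c\<in>L. smult (a c) (\<pi> (L - {c})))"
    have "pe T q x = (\<Sum>c\<in>L. sc (a c) (pe T (\<pi> (L - {c})) x))"
      unfolding q_def by (simp only: pe_sum[OF T] pe_smult[OF T])
    also have "\<dots> = (\<Sum>c\<in>L. pe T (\<pi> L) (sc (a c) (F c)))"
      by (rule sum.cong[OF refl]) (simp add: pe_vec_scale[OF T] piF)
    also have "\<dots> = pe T (\<pi> L) (\<Sum>c\<in>L. sc (a c) (F c))"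
      by (rule lin_sum[OF pe_linear[OF T], symmetric])
    also have "\<dots> = 0" using s lin_0[OF pe_linear[OF T]] by simp
    finally have "q = 0" using pe_inj[OF T inj, of q x] x0 by blast
    then have "poly q c0 = 0" by simp
    moreover have "poly q c0 = a c0 * poly (\<pi> (L - {c0})) c0"
    proof -
      have "poly q c0 = (\<Sum>c\<in>L. a c * poly (\<pi> (L - {c})) c0)" unfolding q_def by (simp add: poly_sum)
      also have "\<dots> = a c0 * poly (\<pi> (L - {c0})) c0 + (\<Sum>c\<in>L - {c0}. a c * poly (\<pi> (L - {c})) c0)"
        by (rule sum.remove[OF L c0])
      also have "(\<Sum>c\<in>L - {c0}. a c * poly (\<pi> (L - {c})) c0) = 0"
      proof (rule sum.neutral, rule ballI)
        fix c assume "c \<in> L - {c0}"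
        then have "c0 \<in> L - {c}" using c0 by auto
        then have "poly (\<pi> (L - {c})) c0 = 0" using L by (simp add: \<pi>_def poly_prod prod_zero_iff)
        then show "a c * poly (\<pi> (L - {c})) c0 = 0" by simp
      qed
      finally show ?thesis by simp
    qed
    moreover have "poly (\<pi> (L - {c0})) c0 \<noteq> 0" using L by (simp add: \<pi>_def poly_prod prod_zero_iff)
    ultimately show "a c0 = 0" by simp
  qed
  have injF: "inj F"
  proof
    fix c d assume "F c = F d"
    show "c = d"
    proof (rule ccontr)
      assume cd: "c \<noteq> d"
      have "(\<Sum>e\<in>{c, d}. sc ((\<lambda>e. if e = c then 1 else -1) e) (F e)) = sc 1 (F c) + sc (-1) (F d)"
        using cd by (simp add: sum.insert)
      also have "\<dots> = 0" using \<open>F c = F d\<close> by simp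
      finally have "\<forall>e\<in>{c, d}. (\<lambda>e. if e = c then 1 else -1) e = (0::complex)"
        by (intro key) auto
      then show False by simp
    qed
  qed
  have "independent (range F)"
    unfolding independent_explicit_finite_subsets
  proof (intro allI impI ballI)
    fix S u v assume S: "S \<subseteq> range F" "finite S" and s: "(\<Sum>v\<in>S. sc (u v) v) = 0" and v: "v \<in> S"
    define L where "L = F -` S"
    have fL: "finite L" unfolding L_def by (rule finite_vimageI[OF S(2) injF])
    have SL: "S = F ` L" unfolding L_def using S(1) by (simp add: image_vimage_eq Int_absorb2)
    have iL: "inj_on F L" by (rule inj_on_subset[OF injF subset_UNIV])
    have "(\<Sum>v\<in>S. sc (u v) v) = (\<Sum>c\<in>L. sc (u (F c)) (F c))"
      unfolding SL sum.reindex[OF iL] by (simp add: o_def)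
    then have "(\<Sum>c\<in>L. sc (u (F c)) (F c)) = 0" using s by simp
    then have "\<forall>c\<in>L. u (F c) = 0" by (rule key[OF fL])
    then show "u v = 0" using v SL by blast
  qed
  then have "countable (range F)" by (rule indep_countable[OF _ _ cB]) (simp add: spB)
  then have "countable (UNIV :: complex set)" using injF countable_image_inj_on by blast
  then show False using uncountable_UNIV_complex by blast
qed

end



lemma W2_Qc: "Qc \<in> W2" by (metis Qc_W2 W2.intros)
lemma W2_zero: "U_smul 0 U_one \<in> W2" by (simp add: W2.intros)
lemma ev_z0: "U_even z0" by (simp add: z0_eq)
lemma ev_z1': "U_even z1'" by (simp add: z1'_eq)
lemma ev_Qc: "U_even Qc" by (simp add: Qc_def)
lemma od_phi0: "U_odd phi0" by (simp add: phi0_eq)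
lemma od_phi1: "U_odd phi1" by (simp add: phi1_eq)

locale sm =
  fixes sc :: "complex \<Rightarrow> 'v::ab_group_add \<Rightarrow> 'v" and V0 V1 :: "'v set" and act :: "U \<Rightarrow> 'v \<Rightarrow> 'v"
  assumes simple: "simple_module W2 sc V0 V1 act"
begin

lemma gm: "graded_module W2 sc V0 V1 act" using simple by (simp add: simple_module_def)
lemma vs: "vector_space sc" using gm by (simp add: graded_module_def)

sublocale cvs sc by (unfold_locales) (use vs in \<open>simp_all add: vector_space_def\<close>)

lemma nz: "\<exists>x::'v. x \<noteq> 0" using simple by (simp add: simple_module_def)
lemma simp_sub: "graded_submodule W2 sc V0 V1 act S \<Longrightarrow> S = {0} \<or> S = UNIV"
  using simple by (simp add: simple_module_def)
lemma lin: "u \<in> W2 \<Longrightarrow> Vector_Spaces.linear sc sc (act u)"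
  using gm by (simp add: graded_module_def)
lemma a_add: "u \<in> W2 \<Longrightarrow> v \<in> W2 \<Longrightarrow> act (U_add u v) x = act u x + act v x"
  using gm by (simp add: graded_module_def)
lemma a_smul: "u \<in> W2 \<Longrightarrow> act (U_smul k u) x = sc k (act u x)"
  using gm by (simp add: graded_module_def)
lemma a_mult: "u \<in> W2 \<Longrightarrow> v \<in> W2 \<Longrightarrow> act (U_mult u v) x = act u (act v x)"
  using gm by (simp add: graded_module_def)
lemma a_one: "act U_one x = x"
  using gm by (simp add: graded_module_def)
lemma a_even: "u \<in> W2 \<Longrightarrow> U_even u \<Longrightarrow> act u ` V0 \<subseteq> V0 \<and> act u ` V1 \<subseteq> V1"
  using gm unfolding graded_module_def by (elim conjE) (drule bspec, assumption, erule mp)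
lemma a_odd: "u \<in> W2 \<Longrightarrow> U_odd u \<Longrightarrow> act u ` V0 \<subseteq> V1 \<and> act u ` V1 \<subseteq> V0"
  using gm unfolding graded_module_def by (elim conjE) (drule bspec, assumption, erule mp)
lemma a_even0: "u \<in> W2 \<Longrightarrow> U_even u \<Longrightarrow> x \<in> V0 \<Longrightarrow> act u x \<in> V0"
  using a_even by blast
lemma a_even1: "u \<in> W2 \<Longrightarrow> U_even u \<Longrightarrow> x \<in> V1 \<Longrightarrow> act u x \<in> V1"
  using a_even by blast
lemma a_odd0: "u \<in> W2 \<Longrightarrow> U_odd u \<Longrightarrow> x \<in> V0 \<Longrightarrow> act u x \<in> V1"
  using a_odd by blast
lemma a_odd1: "u \<in> W2 \<Longrightarrow> U_odd u \<Longrightarrow> x \<in> V1 \<Longrightarrow> act u x \<in> V0"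
  using a_odd by blast
lemma grad: "grading sc V0 V1" using gm by (simp add: graded_module_def)
lemma sub0: "subspace V0" using grad by (simp add: grading_def)
lemma sub1: "subspace V1" using grad by (simp add: grading_def)
lemma int01: "V0 \<inter> V1 = {0}" using grad by (simp add: grading_def)
lemma decomp: "\<exists>a\<in>V0. \<exists>b\<in>V1. x = a + b" using grad by (simp add: grading_def)

lemma a_zero: "act (U_smul 0 U_one) x = 0"
  by (simp add: a_smul W2.intros)

lemma lin_span_stable:
  assumes "Vector_Spaces.linear sc sc f" "f ` H \<subseteq> span H" "x \<in> span H"
  shows "f x \<in> span H"
  using assms(3)
proof (induct rule: span_induct_alt)
  case base then show ?case using lin_0[OF assms(1)] by (simp add: span_zero)
next
  case (step c x y)
  then show ?case using assms(2) by (simp add: lin_add[OF assms(1)] lin_scale[OF assms(1)] span_add span_scale subset_iff)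
qed

lemma span_graded:
  assumes "H \<subseteq> V0 \<union> V1" "x \<in> span H"
  shows "\<exists>a\<in>span H \<inter> V0. \<exists>b\<in>span H \<inter> V1. x = a + b"
proof -
  have "H = (H \<inter> V0) \<union> (H \<inter> V1)" using assms(1) by blast
  then have "x \<in> span ((H \<inter> V0) \<union> (H \<inter> V1))" using assms(2) by simp
  then obtain a b where ab: "x = a + b" "a \<in> span (H \<inter> V0)" "b \<in> span (H \<inter> V1)"
    unfolding span_Un by blast
  have "a \<in> V0" using ab span_minimal[OF _ sub0, of "H \<inter> V0"] by blast
  moreover have "b \<in> V1" using ab span_minimal[OF _ sub1, of "H \<inter> V1"] by blast
  moreover have "a \<in> span H" "b \<in> span H" using ab span_mono[of "H \<inter> V0" H] span_mono[of "H \<inter> V1" H] by blast+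
  ultimately show ?thesis using ab by blast
qed

definition Gens :: "U set" where "Gens = {phi0, phi1, z0, z1'}"

lemma Gens_W2: "g \<in> Gens \<Longrightarrow> g \<in> W2" by (auto simp: Gens_def W2.intros)

lemma word_hom: "ws \<in> lists Gens \<Longrightarrow> v \<in> V0 \<union> V1 \<Longrightarrow> foldr act ws v \<in> V0 \<union> V1"
proof (induct ws)
  case Nil then show ?case by simp
next
  case (Cons g ws)
  then have g: "g \<in> Gens" and h: "foldr act ws v \<in> V0 \<union> V1" by auto
  show ?case using g h
    by (auto simp: Gens_def W2.intros ev_z0 ev_z1' od_phi0 od_phi1 a_even0 a_even1 a_odd0 a_odd1)
qed

lemma countable_span:
  obtains B where "countable B" "span B = UNIV"
proof -
  obtain x where x: "x \<noteq> (0::'v)" using nz by blast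
  obtain a b where ab: "a \<in> V0" "b \<in> V1" "x = a + b" using decomp by blast
  obtain v where v: "v \<noteq> 0" "v \<in> V0 \<union> V1" using ab x by (metis Un_iff add.left_neutral)
  define H where "H = (\<lambda>ws. foldr act ws v) ` lists Gens"
  have cH: "countable H" unfolding H_def Gens_def by simp
  have HV: "H \<subseteq> V0 \<union> V1" unfolding H_def using word_hom v by blast
  have vH: "v \<in> span H" unfolding H_def by (rule span_base) (metis foldr_Nil id_apply image_eqI lists.Nil)
  have gH: "act g ` H \<subseteq> span H" if "g \<in> Gens" for g
  proof
    fix y assume "y \<in> act g ` H"
    then obtain ws where ws: "ws \<in> lists Gens" "y = act g (foldr act ws v)" unfolding H_def by blast
    then have "y = foldr act (g # ws) v" "g # ws \<in> lists Gens" using that by auto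
    then show "y \<in> span H" unfolding H_def by (intro span_base) blast
  qed
  have stab: "act u y \<in> span H" if "u \<in> W2" "y \<in> span H" for u y
    using that
  proof (induct u arbitrary: y rule: W2.induct)
    case W2_one then show ?case by (simp add: a_one)
  next
    case (W2_add u w) then show ?case by (simp add: a_add span_add)
  next
    case (W2_smul u k) then show ?case by (simp add: a_smul span_scale)
  next
    case (W2_mult u w) then show ?case by (simp add: a_mult)
  next
    case W2_phi0
    have "act phi0 ` H \<subseteq> span H" by (rule gH) (simp add: Gens_def)
    then show ?case using lin_span_stable[OF lin[OF W2.W2_phi0]] W2_phi0 by blast
  next
    case W2_phi1
    have "act phi1 ` H \<subseteq> span H" by (rule gH) (simp add: Gens_def)
    then show ?case using lin_span_stable[OF lin[OF W2.W2_phi1]] W2_phi1 by blast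
  next
    case W2_z0
    have "act z0 ` H \<subseteq> span H" by (rule gH) (simp add: Gens_def)
    then show ?case using lin_span_stable[OF lin[OF W2.W2_z0]] W2_z0 by blast
  next
    case W2_z1'
    have "act z1' ` H \<subseteq> span H" by (rule gH) (simp add: Gens_def)
    then show ?case using lin_span_stable[OF lin[OF W2.W2_z1']] W2_z1' by blast
  qed
  have "graded_submodule W2 sc V0 V1 act (span H)"
    unfolding graded_submodule_def using stab span_graded[OF HV] by auto
  then have "span H = UNIV" using simp_sub vH v(1) by blast
  then show ?thesis using that cH by blast
qed


lemma lin_D: "Vector_Spaces.linear sc sc T \<Longrightarrow> Vector_Spaces.linear sc sc (\<lambda>x. T x - sc c x)"
  unfolding Vector_Spaces.linear_iff using vs
  by (simp add: lin_add lin_scale scale_right_distrib algebra_simps)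

lemma scalar:
  assumes g: "g \<in> W2" "U_even g" and comm: "\<And>u x. u \<in> W2 \<Longrightarrow> act g (act u x) = act u (act g x)"
  shows "\<exists>l. \<forall>x. act g x = sc l x"
proof (rule ccontr)
  assume na: "\<not> (\<exists>l. \<forall>x. act g x = sc l x)"
  have T: "Vector_Spaces.linear sc sc (act g)" using lin g by blast
  obtain B where cB: "countable B" and spB: "span B = UNIV" using countable_span by blast
  obtain x0 :: 'v where x0: "x0 \<noteq> 0" using nz by blast
  have "bij (\<lambda>x. act g x - sc c x)" for c
  proof -
    define D where "D = (\<lambda>x. act g x - sc c x)"
    have linD: "Vector_Spaces.linear sc sc D" unfolding D_def by (rule lin_D[OF T])
    have Dcomm: "D (act u x) = act u (D x)" if "u \<in> W2" for u x
      unfolding D_def using comm[OF that] by (simp add: lin_diff[OF lin[OF that]] lin_scale[OF lin[OF that]])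
    have D0: "D x \<in> V0" if "x \<in> V0" for x
      unfolding D_def using that a_even0[OF g] sub0 by (simp add: subspace_diff subspace_scale)
    have D1: "D x \<in> V1" if "x \<in> V1" for x
      unfolding D_def using that a_even1[OF g] sub1 by (simp add: subspace_diff subspace_scale)
    define K where "K = {x. D x = 0}"
    have "graded_submodule W2 sc V0 V1 act K"
      unfolding graded_submodule_def
    proof (intro conjI ballI)
      show "subspace K" unfolding K_def
        by (rule subspaceI) (simp_all add: lin_0[OF linD] lin_add[OF linD] lin_scale[OF linD])
      show "act u ` K \<subseteq> K" if "u \<in> W2" for u
        unfolding K_def using Dcomm[OF that] lin_0[OF lin[OF that]] by auto
      fix x assume "x \<in> K"
      obtain a b where ab: "a \<in> V0" "b \<in> V1" "x = a + b" using decomp by blast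
      have "D a + D b = 0" using \<open>x \<in> K\<close> ab by (simp add: K_def lin_add[OF linD, symmetric])
      then have "D a = - D b" by (simp add: eq_neg_iff_add_eq_0)
      then have "D a \<in> V1" using D1[OF ab(2)] sub1 by (simp add: subspace_neg)
      then have "D a = 0" using D0[OF ab(1)] int01 by blast
      moreover have "D b = 0" using \<open>D a + D b = 0\<close> \<open>D a = 0\<close> by simp
      ultimately show "\<exists>a\<in>K \<inter> V0. \<exists>b\<in>K \<inter> V1. x = a + b" using ab unfolding K_def by blast
    qed
    then have "K = {0} \<or> K = UNIV" by (rule simp_sub)
    moreover have "K \<noteq> UNIV"
    proof
      assume "K = UNIV"
      have "act g x = sc c x" for x
      proof -
        have "x \<in> K" using \<open>K = UNIV\<close> by simp
        then show ?thesis by (simp add: K_def D_def)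
      qed
      then show False using na by blast
    qed
    ultimately have K0: "K = {0}" by blast
    have injD: "inj D"
    proof
      fix x y assume "D x = D y"
      then have "D (x - y) = 0" by (simp add: lin_diff[OF linD])
      then have "x - y \<in> K" unfolding K_def by simp
      then show "x = y" using K0 by simp
    qed
    define I where "I = range D"
    have "graded_submodule W2 sc V0 V1 act I"
      unfolding graded_submodule_def
    proof (intro conjI ballI)
      show "subspace I" unfolding I_def
      proof (rule subspaceI)
        show "0 \<in> range D" using lin_0[OF linD] by (metis rangeI)
        fix x y c assume "x \<in> range D" "y \<in> range D"
        then obtain x' y' where "x = D x'" "y = D y'" by blast
        then show "x + y \<in> range D" by (metis lin_add[OF linD] rangeI)
      next
        fix x c assume "x \<in> range D"
        then obtain x' where "x = D x'" by blast
        then show "sc c x \<in> range D" by (metis lin_scale[OF linD] rangeI)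
      qed
      show "act u ` I \<subseteq> I" if u: "u \<in> W2" for u
      proof (rule image_subsetI)
        fix y assume "y \<in> I"
        then obtain z where "y = D z" unfolding I_def by blast
        then show "act u y \<in> I" unfolding I_def using Dcomm[OF u, of z] by (metis rangeI)
      qed
      fix x assume "x \<in> I"
      then obtain y where y: "x = D y" unfolding I_def by blast
      obtain a b where ab: "a \<in> V0" "b \<in> V1" "y = a + b" using decomp by blast
      have "x = D a + D b" using y ab by (simp add: lin_add[OF linD])
      moreover have "D a \<in> I \<inter> V0" "D b \<in> I \<inter> V1" using D0[OF ab(1)] D1[OF ab(2)] unfolding I_def by auto
      ultimately show "\<exists>a\<in>I \<inter> V0. \<exists>b\<in>I \<inter> V1. x = a + b" by blast
    qed
    then have "I = {0} \<or> I = UNIV" by (rule simp_sub)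
    moreover have "I \<noteq> {0}"
    proof
      assume "I = {0}"
      then have "D x = 0" for x unfolding I_def by auto
      then have "K = UNIV" unfolding K_def by auto
      then show False using K0 x0 by auto
    qed
    ultimately have "surj D" unfolding I_def by blast
    then show ?thesis using injD unfolding D_def by (simp add: bij_def)
  qed
  then show False using dixmier[OF cB spB T _ x0] by blast
qed

lemma P0P0: "act phi0 (act phi0 x) = act z0 x"
  by (metis a_mult phi0_sq W2.W2_phi0)
lemma P1P1: "act phi1 (act phi1 x) = act Qc x"
  by (metis a_mult phi1_sq W2.W2_phi1)
lemma anti: "act phi0 (act phi1 x) = - act phi1 (act phi0 x)"
proof -
  have "act (U_add (U_mult phi0 phi1) (U_mult phi1 phi0)) x = 0" by (simp only: phi_anti a_zero)
  then show ?thesis by (simp add: a_add a_mult W2.intros eq_neg_iff_add_eq_0)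
qed
lemma ZY: "act z0 (act z1' x) + act phi1 (act phi0 x) = act Qc x"
  by (metis Qc_W2 a_add a_mult W2.intros)
lemma Yphi0: "act phi0 (act z1' x) = act z1' (act phi0 x) + (act phi1 x + act phi1 x)"
  by (metis y_phi0 a_add a_mult W2.intros)
lemma Yphi1: "act z1' (act phi1 x) = act phi1 (act z1' x) + ((act z1' (act phi0 x) + act z1' (act phi0 x)) + (act phi1 x + act phi1 x))"
  by (metis y_phi1 a_add a_mult W2.intros)
lemma z0_comm: "u \<in> W2 \<Longrightarrow> act z0 (act u x) = act u (act z0 x)"
  by (metis z0_central a_mult W2.intros)
lemma Qc_comm: "u \<in> W2 \<Longrightarrow> act Qc (act u x) = act u (act Qc x)"
  by (metis Qc_central a_mult W2_Qc)


lemma hom_nz: obtains v where "v \<noteq> 0" "v \<in> V0 \<or> v \<in> V1"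
proof -
  obtain x where x: "x \<noteq> (0::'v)" using nz by blast
  obtain a b where ab: "a \<in> V0" "b \<in> V1" "x = a + b" using decomp by blast
  show ?thesis using ab x that by (metis add.left_neutral)
qed

lemma linP0: "Vector_Spaces.linear sc sc (act phi0)" by (rule lin) (rule W2.intros)
lemma linP1: "Vector_Spaces.linear sc sc (act phi1)" by (rule lin) (rule W2.intros)
lemma linY: "Vector_Spaces.linear sc sc (act z1')" by (rule lin) (rule W2.intros)
lemma linZ: "Vector_Spaces.linear sc sc (act z0)" by (rule lin) (rule W2.intros)

lemma odd_zero:
  assumes Z: "\<And>x. act z0 x = 0"
  shows "act phi0 x = 0 \<and> act phi1 x = 0"
proof -
  let ?P0 = "act phi0" and ?P1 = "act phi1" and ?Y = "act z1'"
  define S where "S = {?P0 a + ?P1 b | a b. True}"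
  have SP0: "?P0 a \<in> S" for a unfolding S_def using lin_0[OF linP1] by (metis (mono_tags, lifting) add.right_neutral mem_Collect_eq)
  have SP1: "?P1 b \<in> S" for b unfolding S_def using lin_0[OF linP0] by (metis (mono_tags, lifting) add.left_neutral mem_Collect_eq)
  have Sadd: "x \<in> S \<Longrightarrow> y \<in> S \<Longrightarrow> x + y \<in> S" for x y
  proof -
    assume "x \<in> S" "y \<in> S"
    then obtain a b a' b' where "x = ?P0 a + ?P1 b" "y = ?P0 a' + ?P1 b'" unfolding S_def by blast
    then have "x + y = ?P0 (a + a') + ?P1 (b + b')" by (simp add: lin_add[OF linP0] lin_add[OF linP1] algebra_simps)
    then show ?thesis unfolding S_def by blast
  qed
  have Sscale: "x \<in> S \<Longrightarrow> sc c x \<in> S" for x c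
  proof -
    assume "x \<in> S"
    then obtain a b where "x = ?P0 a + ?P1 b" unfolding S_def by blast
    then have "sc c x = ?P0 (sc c a) + ?P1 (sc c b)" by (simp add: lin_scale[OF linP0] lin_scale[OF linP1] scale_right_distrib)
    then show ?thesis unfolding S_def by blast
  qed
  have YP0: "?Y (?P0 a) = ?P0 (?Y a) + ?P1 (- (a + a))" for a
    using Yphi0[of a] by (simp add: lin_neg[OF linP1] lin_add[OF linP1] lin_diff[OF linP1] algebra_simps)
  have stabS: "act u y \<in> S" if "u \<in> W2" "y \<in> S" for u y
    using that
  proof (induct u arbitrary: y rule: W2.induct)
    case W2_one then show ?case by (simp add: a_one)
  next
    case (W2_add u w) then show ?case by (simp add: a_add Sadd)
  next
    case (W2_smul u k) then show ?case by (simp add: a_smul Sscale)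
  next
    case (W2_mult u w) then show ?case by (simp add: a_mult)
  next
    case W2_phi0 show ?case by (rule SP0)
  next
    case W2_phi1 show ?case by (rule SP1)
  next
    case W2_z0 then show ?case using Z SP0[of 0] lin_0[OF linP0] by simp
  next
    case W2_z1'
    then obtain a b where y: "y = ?P0 a + ?P1 b" unfolding S_def by blast
    have "?Y y = ?Y (?P0 a) + ?Y (?P1 b)" using y by (simp add: lin_add[OF linY])
    moreover have "?Y (?P0 a) \<in> S" using YP0[of a] Sadd SP0 SP1 by metis
    moreover have "?Y (?P0 b) \<in> S" using YP0[of b] Sadd SP0 SP1 by metis
    moreover have "?Y (?P1 b) \<in> S" using Yphi1[of b] Sadd SP1 \<open>?Y (?P0 b) \<in> S\<close> by metis
    ultimately show ?case using Sadd by metis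
  qed
  have "graded_submodule W2 sc V0 V1 act S"
    unfolding graded_submodule_def
  proof (intro conjI ballI)
    show "subspace S"
      by (rule subspaceI) (use SP0[of 0] lin_0[OF linP0] Sadd Sscale in auto)
    show "act u ` S \<subseteq> S" if "u \<in> W2" for u using stabS[OF that] by blast
    fix x assume "x \<in> S"
    then obtain a b where x: "x = ?P0 a + ?P1 b" unfolding S_def by blast
    obtain a0 a1 where a: "a0 \<in> V0" "a1 \<in> V1" "a = a0 + a1" using decomp by blast
    obtain b0 b1 where b: "b0 \<in> V0" "b1 \<in> V1" "b = b0 + b1" using decomp by blast
    have "x = (?P0 a1 + ?P1 b1) + (?P0 a0 + ?P1 b0)" using x a b
      by (simp add: lin_add[OF linP0] lin_add[OF linP1] algebra_simps)
    moreover have "?P0 a1 + ?P1 b1 \<in> V0" using a b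
      by (intro subspace_add[OF sub0] a_odd1) (auto intro: W2.intros simp: od_phi0 od_phi1)
    moreover have "?P0 a0 + ?P1 b0 \<in> V1" using a b
      by (intro subspace_add[OF sub1] a_odd0) (auto intro: W2.intros simp: od_phi0 od_phi1)
    moreover have "?P0 a1 + ?P1 b1 \<in> S" "?P0 a0 + ?P1 b0 \<in> S" unfolding S_def by blast+
    ultimately show "\<exists>a\<in>S \<inter> V0. \<exists>b\<in>S \<inter> V1. x = a + b" by blast
  qed
  then have "S = {0} \<or> S = UNIV" by (rule simp_sub)
  moreover have "S \<noteq> UNIV"
  proof
    assume SU: "S = UNIV"
    let ?W = "\<lambda>x. ?P1 (?P0 x)"
    have linW: "Vector_Spaces.linear sc sc ?W" using Vector_Spaces.linear_compose[OF linP0 linP1] by (simp add: o_def)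
    have PP0: "?P0 (?P0 x) = 0" for x using P0P0 Z by simp
    have PP1: "?P1 (?P1 x) = ?W x" for x using P1P1[of x] ZY[of x] Z by simp
    have SS: "\<exists>a b. y = ?P0 a + ?P1 b" for y using SU unfolding S_def by blast
    have allW: "\<exists>z. y = ?W z" for y
    proof -
      obtain a b where y: "y = ?P0 a + ?P1 b" using SS by blast
      obtain a1 b1 where a: "a = ?P0 a1 + ?P1 b1" using SS by blast
      obtain a2 b2 where b: "b = ?P0 a2 + ?P1 b2" using SS by blast
      have "y = ?W (- b1 + a2 + b2)" using y a b
        by (simp add: lin_add[OF linP0] lin_add[OF linP1] lin_add[OF linW] lin_neg[OF linW] lin_diff[OF linP0] lin_diff[OF linP1] PP0 PP1 anti)
      then show ?thesis by blast
    qed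
    have WW: "?W (?W x) = 0" for x using anti[of "?P0 x"] PP0[of x] lin_0[OF linP1] lin_neg[OF linP1]
      by (simp add: lin_0[OF linP0] lin_0[OF linP1])
    obtain x0 :: 'v where x0: "x0 \<noteq> 0" using nz by blast
    obtain z where z: "x0 = ?W z" using allW by blast
    obtain z' where z': "z = ?W z'" using allW by blast
    show False using x0 z z' WW by simp
  qed
  ultimately have "S = {0}" by blast
  then show ?thesis using SP0[of x] SP1[of x] by blast
qed


lemma vs_C: "vector_space ((*) :: complex \<Rightarrow> complex \<Rightarrow> complex)"
  by (unfold_locales) (simp_all add: algebra_simps)

lemma case0:
  assumes Z: "\<And>x. act z0 x = 0"
  shows "\<exists>t :: complex. \<exists>(G0, G1) \<in> {(UNIV, {0}), ({0}, UNIV)}. \<exists>\<gamma>.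
            graded_module W2 ((*) :: complex \<Rightarrow> complex \<Rightarrow> complex) G0 G1 \<gamma> \<and>
            \<gamma> phi0 = (\<lambda>z. 0) \<and> \<gamma> phi1 = (\<lambda>z. 0) \<and> \<gamma> z0 = (\<lambda>z. 0) \<and>
            \<gamma> z1' = (\<lambda>z. t * z) \<and>
            module_iso W2 sc V0 V1 act (*) G0 G1 \<gamma>"
proof -
  have P0: "act phi0 x = 0" and P1: "act phi1 x = 0" for x using odd_zero[OF Z] by auto
  have Ycomm: "act z1' (act u x) = act u (act z1' x)" if "u \<in> W2" for u x
    using that
  proof (induct u arbitrary: x rule: W2.induct)
    case W2_one then show ?case by (simp add: a_one)
  next
    case (W2_add u w) then show ?case by (simp add: a_add lin_add[OF linY])
  next
    case (W2_smul u k) then show ?case by (simp add: a_smul lin_scale[OF linY])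
  next
    case (W2_mult u w) then show ?case by (simp add: a_mult)
  qed (simp_all add: P0 P1 Z lin_0[OF linY])
  obtain t where t: "\<And>x. act z1' x = sc t x"
    using scalar[OF W2.W2_z1' ev_z1' Ycomm] by blast
  have allsc: "\<exists>k. \<forall>x. act u x = sc k x" if "u \<in> W2" for u
    using that
  proof (induct u rule: W2.induct)
    case W2_one then show ?case by (metis a_one scale_one)
  next
    case W2_phi0 then show ?case by (metis P0 scale_zero_left)
  next
    case W2_phi1 then show ?case by (metis P1 scale_zero_left)
  next
    case W2_z0 then show ?case by (metis Z scale_zero_left)
  next
    case W2_z1' then show ?case using t by blast
  next
    case (W2_add u w)
    then obtain k l where "\<forall>x. act u x = sc k x" "\<forall>x. act w x = sc l x" by blast
    then show ?case using W2_add by (metis a_add scale_left_distrib)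
  next
    case (W2_smul u k)
    then obtain l where "\<forall>x. act u x = sc l x" by blast
    then show ?case using W2_smul by (metis a_smul scale_scale)
  next
    case (W2_mult u w)
    then obtain k l where "\<forall>x. act u x = sc k x" "\<forall>x. act w x = sc l x" by blast
    then show ?case using W2_mult by (metis a_mult scale_scale)
  qed
  obtain v where v: "v \<noteq> 0" "v \<in> V0 \<or> v \<in> V1" using hom_nz by blast
  have "graded_submodule W2 sc V0 V1 act (span {v})"
    unfolding graded_submodule_def
  proof (intro conjI ballI)
    show "subspace (span {v})" by simp
    show "act u ` span {v} \<subseteq> span {v}" if "u \<in> W2" for u
      using allsc[OF that] by (auto intro: span_scale)
    fix x assume "x \<in> span {v}"
    then obtain k where x: "x = sc k v" unfolding span_singleton by blast
    show "\<exists>a\<in>span {v} \<inter> V0. \<exists>b\<in>span {v} \<inter> V1. x = a + b"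
    proof (cases "v \<in> V0")
      case True
      then have "x \<in> span {v} \<inter> V0" using x sub0 by (simp add: subspace_scale span_base span_scale)
      moreover have "0 \<in> span {v} \<inter> V1" using sub1 by (simp add: span_zero subspace_0)
      ultimately show ?thesis by (metis add.right_neutral)
    next
      case False
      then have "v \<in> V1" using v by blast
      then have "x \<in> span {v} \<inter> V1" using x sub1 by (simp add: subspace_scale span_base span_scale)
      moreover have "0 \<in> span {v} \<inter> V0" using sub0 by (simp add: span_zero subspace_0)
      ultimately show ?thesis by (metis add.left_neutral)
    qed
  qed
  then have "span {v} = UNIV" using simp_sub v(1) by (metis singletonD span_base singletonI)
  then have every: "\<exists>k. y = sc k v" for y unfolding span_singleton by blast
  define lam where "lam u = (SOME k. \<forall>x. act u x = sc k x)" for u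
  have lam: "act u x = sc (lam u) x" if "u \<in> W2" for u x
    using someI_ex[OF allsc[OF that]] unfolding lam_def by blast
  have lam_uniq: "lam u = k" if "u \<in> W2" "\<And>x. act u x = sc k x" for u k
    using lam[OF that(1), of v] that(2)[of v] v(1) by simp
  have lam_odd: "lam u = 0" if "u \<in> W2" "U_odd u" for u
  proof -
    have "act u v \<in> V0 \<inter> V1" using v a_odd0[OF that] a_odd1[OF that] lam[OF that(1)] sub0 sub1
      by (metis IntI subspace_scale)
    then have "sc (lam u) v = 0" using int01 lam[OF that(1)] by auto
    then show ?thesis using v(1) by simp
  qed
  define \<gamma> where "\<gamma> u = (\<lambda>z::complex. lam u * z)" for u
  define G where "G = (if v \<in> V0 then (UNIV :: complex set, {0 :: complex}) else ({0}, UNIV))"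
  obtain G0 G1 where GG: "G = (G0, G1)" by fastforce
  have Gin: "(G0, G1) \<in> {(UNIV, {0}), ({0}, UNIV)}" using GG unfolding G_def by (auto split: if_splits)
  have mC: "module ((*) :: complex \<Rightarrow> complex \<Rightarrow> complex)" using vs_C by (simp add: module_iff_vector_space)
  have gmod: "graded_module W2 ((*) :: complex \<Rightarrow> complex \<Rightarrow> complex) G0 G1 \<gamma>"
    unfolding graded_module_def
  proof (intro conjI ballI allI impI)
    show "vector_space ((*) :: complex \<Rightarrow> complex \<Rightarrow> complex)" by (rule vs_C)
    show "grading (*) G0 G1" using Gin module.subspace_UNIV[OF mC] module.subspace_single_0[OF mC]
      unfolding grading_def by (auto)
    show "Vector_Spaces.linear (*) (*) (\<gamma> u)" for u
      unfolding Vector_Spaces.linear_iff \<gamma>_def using vs_C by (simp add: algebra_simps)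
    show "\<gamma> (U_add u w) = (\<lambda>x. \<gamma> u x + \<gamma> w x)" if "u \<in> W2" "w \<in> W2" for u w
    proof -
      have "lam (U_add u w) = lam u + lam w"
        using that by (intro lam_uniq) (simp_all add: W2.intros a_add lam[OF that(1)] lam[OF that(2)] scale_left_distrib)
      then show ?thesis unfolding \<gamma>_def by (simp add: fun_eq_iff algebra_simps)
    qed
    show "\<gamma> (U_smul k u) = (\<lambda>x. k * \<gamma> u x)" if "u \<in> W2" for u k
    proof -
      have "lam (U_smul k u) = k * lam u"
        using that by (intro lam_uniq) (simp_all add: W2.intros a_smul lam[OF that])
      then show ?thesis unfolding \<gamma>_def by (simp add: fun_eq_iff algebra_simps)
    qed
    show "\<gamma> (U_mult u w) = \<gamma> u \<circ> \<gamma> w" if "u \<in> W2" "w \<in> W2" for u w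
    proof -
      have "lam (U_mult u w) = lam u * lam w"
        using that by (intro lam_uniq) (simp_all add: W2.intros a_mult lam[OF that(1)] lam[OF that(2)])
      then show ?thesis unfolding \<gamma>_def by (simp add: fun_eq_iff algebra_simps o_def)
    qed
    show "\<gamma> U_one = id"
    proof -
      have "lam U_one = 1" by (intro lam_uniq) (simp_all add: W2.intros a_one)
      then show ?thesis unfolding \<gamma>_def by (simp add: fun_eq_iff)
    qed
    show "\<gamma> u ` G0 \<subseteq> G0" "\<gamma> u ` G1 \<subseteq> G1" if "u \<in> W2" "U_even u" for u
      using Gin unfolding \<gamma>_def by auto
    show "\<gamma> u ` G0 \<subseteq> G1" "\<gamma> u ` G1 \<subseteq> G0" if "u \<in> W2" "U_odd u" for u
      using Gin lam_odd[OF that] unfolding \<gamma>_def by auto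
  qed
  have l0: "lam phi0 = 0" by (rule lam_uniq) (simp_all add: W2.intros P0)
  have l1: "lam phi1 = 0" by (rule lam_uniq) (simp_all add: W2.intros P1)
  have l2: "lam z0 = 0" by (rule lam_uniq) (simp_all add: W2.intros Z)
  have l3: "lam z1' = t" by (rule lam_uniq) (simp_all add: W2.intros t)
  define g where "g k = sc k v" for k
  have injg: "inj g" unfolding g_def inj_def using v(1) by simp
  have surjg: "surj g" unfolding g_def using every by (metis surjI)
  define f where "f = inv g"
  have fg: "f (sc k v) = k" for k unfolding f_def using injg by (metis g_def inv_f_f)
  have bijf: "bij f" unfolding f_def using injg surjg by (intro bij_imp_bij_inv) (simp add: bij_def)
  have iso: "module_iso W2 sc V0 V1 act (*) G0 G1 \<gamma>"
    unfolding module_iso_def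
  proof (intro exI conjI ballI allI)
    show "bij f" by (rule bijf)
    show "Vector_Spaces.linear sc (*) f"
      unfolding Vector_Spaces.linear_iff
    proof (intro conjI allI)
      show "vector_space sc" by (rule vs)
      show "vector_space ((*) :: complex \<Rightarrow> complex \<Rightarrow> complex)" by (rule vs_C)
      fix x y :: 'v and c :: complex
      obtain a where a: "x = sc a v" using every by blast
      obtain b where b: "y = sc b v" using every by blast
      show "f (x + y) = f x + f y" unfolding a b by (simp add: fg scale_left_distrib[symmetric])
      show "f (sc c x) = c * f x" unfolding a by (simp add: fg)
    qed
    have f0: "f 0 = 0" using fg[of 0] by simp
    have "f ` V0 = G0 \<and> f ` V1 = G1"
    proof (cases "v \<in> V0")
      case True
      then have "G0 = UNIV" "G1 = {0}" using GG unfolding G_def by auto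
      moreover have "V0 = UNIV" using every True sub0 by (metis UNIV_eq_I subspace_scale)
      moreover have "V1 = {0}" using int01 \<open>V0 = UNIV\<close> by auto
      ultimately show ?thesis using bijf f0 by (simp add: bij_is_surj)
    next
      case False
      then have vV1: "v \<in> V1" using v by blast
      have "G0 = {0}" "G1 = UNIV" using GG False unfolding G_def by auto
      moreover have "V1 = UNIV" using every vV1 sub1 by (metis UNIV_eq_I subspace_scale)
      moreover have "V0 = {0}" using int01 \<open>V1 = UNIV\<close> by auto
      ultimately show ?thesis using bijf f0 by (simp add: bij_is_surj)
    qed
    then show "f ` V0 = G0" "f ` V1 = G1" by auto
    fix u x assume u: "u \<in> W2"
    obtain a where a: "x = sc a v" using every by blast
    show "f (act u x) = \<gamma> u (f x)" unfolding a \<gamma>_def using u by (simp add: lam fg)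
  qed
  show ?thesis
    using Gin gmod iso l0 l1 l2 l3 unfolding \<gamma>_def by (intro exI[of _ t] bexI[of _ "(G0, G1)"]) (auto simp: fun_eq_iff)
qed


end

definition ev :: "complex \<Rightarrow> complex \<Rightarrow> complex poly poly \<Rightarrow> complex" where
  "ev s1 s2 p = poly (poly p [:s2:]) s1"

lemma ev_simps[simp]:
  "ev s1 s2 (p + q) = ev s1 s2 p + ev s1 s2 q"
  "ev s1 s2 (p - q) = ev s1 s2 p - ev s1 s2 q"
  "ev s1 s2 (p * q) = ev s1 s2 p * ev s1 s2 q"
  "ev s1 s2 (- p) = - ev s1 s2 p"
  "ev s1 s2 (smult [:k:] p) = k * ev s1 s2 p"
  "ev s1 s2 0 = 0" "ev s1 s2 1 = 1"
  "ev s1 s2 px1 = s1" "ev s1 s2 px2 = s2"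
  by (simp_all add: ev_def px1_def px2_def)

locale rl = sm sc V0 V1 act for sc :: "complex \<Rightarrow> 'v::ab_group_add \<Rightarrow> 'v" and V0 V1 act +
  fixes s1 s2 :: complex
  assumes Zs: "\<And>x. act z0 x = sc (s1 + s2) x"
    and Qs: "\<And>x. act Qc x = sc (s1 * s2 * (s1 + s2)) x"
    and cnz: "s1 + s2 \<noteq> 0"
begin

definition lc :: "'v \<Rightarrow> complex \<Rightarrow> complex \<Rightarrow> complex \<Rightarrow> complex \<Rightarrow> 'v" where
  "lc x a b e f = sc a x + sc b (act phi0 x) + sc e (act phi1 x) + sc f (act phi1 (act phi0 x))"

lemma lc_x: "lc x 1 0 0 0 = x" by (simp add: lc_def)

lemma lc_cong: "a = a' \<Longrightarrow> b = b' \<Longrightarrow> e = e' \<Longrightarrow> f = f' \<Longrightarrow> lc x a b e f = lc x a' b' e' f'"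
  by simp

lemma lc_add[simp]: "lc x a b e f + lc x a' b' e' f' = lc x (a + a') (b + b') (e + e') (f + f')"
  by (simp add: lc_def scale_left_distrib algebra_simps)

lemma lc_scale[simp]: "sc k (lc x a b e f) = lc x (k * a) (k * b) (k * e) (k * f)"
  by (simp add: lc_def scale_right_distrib)

lemma lc_P0[simp]: "act phi0 (lc x a b e f) = lc x ((s1 + s2) * b) a (- ((s1 + s2) * f)) (- e)"
proof -
  have "act phi0 (act phi1 (act phi0 x)) = - act phi1 (act phi0 (act phi0 x))" by (rule anti)
  also have "\<dots> = - sc (s1 + s2) (act phi1 x)" by (simp add: P0P0 Zs lin_scale[OF linP1])
  finally have e: "act phi0 (act phi1 (act phi0 x)) = - sc (s1 + s2) (act phi1 x)" .
  show ?thesis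
    by (simp add: lc_def lin_add[OF linP0] lin_scale[OF linP0] lin_add[OF linP1] lin_scale[OF linP1] P0P0 Zs anti e algebra_simps)
qed

lemma lc_P1[simp]: "act phi1 (lc x a b e f) = lc x (s1 * s2 * (s1 + s2) * e) (s1 * s2 * (s1 + s2) * f) a b"
  by (simp add: lc_def lin_add[OF linP1] lin_scale[OF linP1] P1P1 Qs algebra_simps)

definition A :: "'v \<Rightarrow> 'v" where "A y = sc (1 / (s1 + s2)) (sc s1 (act phi0 y) + act phi1 y)"
definition B :: "'v \<Rightarrow> 'v" where "B y = sc (1 / (s1 + s2)) (sc s2 (act phi0 y) + sc (-1) (act phi1 y))"

definition rho :: "U \<Rightarrow> 'v \<Rightarrow> 'v" where
  "rho u y = (case u of Uel p q r s \<Rightarrow>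
     sc (ev s1 s2 p) y + sc (ev s1 s2 q) (A y) + sc (ev s1 s2 r) (B y) + sc (ev s1 s2 s) (A (B y)))"

lemma rho_Uel: "rho (Uel p q r s) y =
     sc (ev s1 s2 p) y + sc (ev s1 s2 q) (A y) + sc (ev s1 s2 r) (B y) + sc (ev s1 s2 s) (A (B y))"
  by (simp add: rho_def)

lemma linA: "Vector_Spaces.linear sc sc A"
  unfolding Vector_Spaces.linear_iff A_def using vs
  by (simp add: lin_add[OF linP0] lin_add[OF linP1] lin_scale[OF linP0] lin_scale[OF linP1] scale_right_distrib algebra_simps)
lemma linB: "Vector_Spaces.linear sc sc B"
  unfolding Vector_Spaces.linear_iff B_def using vs
  by (simp add: lin_add[OF linP0] lin_add[OF linP1] lin_scale[OF linP0] lin_scale[OF linP1] scale_right_distrib algebra_simps)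

definition ic where "ic = 1 / (s1 + s2)"
lemma icdef: "1 / (s1 + s2) = ic" by (simp add: ic_def)
lemma ic: "ic * (s1 + s2) = 1" using cnz by (simp add: ic_def)

lemma AA: "A (A y) = sc s1 y"
proof -
  have "A (A (lc y 1 0 0 0)) = lc y s1 0 0 0"
    unfolding A_def
    apply (simp only: lc_P0 lc_P1 lc_add lc_scale)
    apply (rule lc_cong)
    apply (simp_all only: icdef)
    apply ((simp add: algebra_simps; fail) | (use ic in algebra))+
    done
  then show ?thesis by (simp add: lc_x lc_def)
qed

lemma BB: "B (B y) = sc s2 y"
proof -
  have "B (B (lc y 1 0 0 0)) = lc y s2 0 0 0"
    unfolding B_def
    apply (simp only: lc_P0 lc_P1 lc_add lc_scale)
    apply (rule lc_cong)
    apply (simp_all only: icdef)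
    apply ((simp add: algebra_simps; fail) | (use ic in algebra))+
    done
  then show ?thesis by (simp add: lc_x lc_def)
qed

lemma BA: "B (A y) = sc (-1) (A (B y))"
proof -
  have "B (A (lc y 1 0 0 0)) = sc (-1) (A (B (lc y 1 0 0 0)))"
    unfolding A_def B_def
    apply (simp only: lc_P0 lc_P1 lc_add lc_scale)
    apply (rule lc_cong)
    apply (simp_all only: icdef)
    apply ((simp add: algebra_simps; fail) | (use ic in algebra))+
    done
  then show ?thesis by (simp add: lc_x)
qed


definition lb :: "'v \<Rightarrow> complex \<Rightarrow> complex \<Rightarrow> complex \<Rightarrow> complex \<Rightarrow> 'v" where
  "lb x a b e f = sc a x + sc b (A x) + sc e (B x) + sc f (A (B x))"

lemma lb_cong: "a = a' \<Longrightarrow> b = b' \<Longrightarrow> e = e' \<Longrightarrow> f = f' \<Longrightarrow> lb x a b e f = lb x a' b' e' f'"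
  by simp
lemma lb_add: "lb x a b e f + lb x a' b' e' f' = lb x (a + a') (b + b') (e + e') (f + f')"
  by (simp add: lb_def scale_left_distrib algebra_simps)
lemma lb_scale: "sc k (lb x a b e f) = lb x (k * a) (k * b) (k * e) (k * f)"
  by (simp add: lb_def scale_right_distrib)
lemma lb_A: "A (lb x a b e f) = lb x (s1 * b) a (s1 * f) e"
  by (simp add: lb_def lin_add[OF linA] lin_scale[OF linA] AA algebra_simps)
lemma lb_B: "B (lb x a b e f) = lb x (s2 * e) (- (s2 * f)) a (- b)"
proof -
  have "B (A (B x)) = sc (-1) (A (B (B x)))" by (rule BA)
  also have "\<dots> = sc (- s2) (A x)" by (simp add: BB lin_scale[OF linA])
  finally have e: "B (A (B x)) = sc (- s2) (A x)" .
  show ?thesis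
    by (simp add: lb_def lin_add[OF linB] lin_scale[OF linB] lin_scale[OF linA] BB e BA algebra_simps)
qed
lemma rho_lb: "rho (Uel p q r s) y = lb y (ev s1 s2 p) (ev s1 s2 q) (ev s1 s2 r) (ev s1 s2 s)"
  by (simp add: rho_Uel lb_def)
lemma rho_lb2: "rho (Uel p q r s) y = sc (ev s1 s2 p) y + sc (ev s1 s2 q) (A y) + sc (ev s1 s2 r) (B y) + sc (ev s1 s2 s) (A (B y))"
  by (simp add: rho_Uel)
lemma lb_x: "lb x 1 0 0 0 = x" by (simp add: lb_def)

lemma rho_mult: "rho (U_mult u w) x = rho u (rho w x)"
proof -
  obtain p q r s where u: "u = Uel p q r s" by (cases u)
  obtain p' q' r' s' where w: "w = Uel p' q' r' s'" by (cases w)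
  have rw: "rho w x = lb x (ev s1 s2 p') (ev s1 s2 q') (ev s1 s2 r') (ev s1 s2 s')"
    by (simp only: w rho_lb)
  have l: "rho (U_mult u w) x = lb x (ev s1 s2 (p * p' + px1 * q * q' + px2 * r * r' - px1 * px2 * s * s'))
      (ev s1 s2 (p * q' + q * p' - px2 * r * s' + px2 * s * r'))
      (ev s1 s2 (p * r' + r * p' + px1 * q * s' - px1 * s * q'))
      (ev s1 s2 (p * s' + s * p' + q * r' - r * q'))"
    by (simp only: u w U_mult.simps rho_lb)
  show ?thesis
    unfolding l rw unfolding u
    apply (simp only: rho_lb2 lb_A lb_B lb_add lb_scale)
    apply (rule lb_cong)
    apply (simp_all add: algebra_simps)
    done
qed


lemma rho_add: "rho (U_add u w) y = rho u y + rho w y"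
  by (cases u; cases w) (simp add: rho_lb2 scale_left_distrib algebra_simps)
lemma rho_smul: "rho (U_smul k u) y = sc k (rho u y)"
  by (cases u) (simp add: rho_lb2 scale_right_distrib)
lemma rho_one: "rho U_one y = y"
  by (simp add: U_one_def rho_lb2)

lemma rho_lin: "Vector_Spaces.linear sc sc (rho u)"
proof (cases u)
  case (Uel p q r s)
  show ?thesis unfolding Uel Vector_Spaces.linear_iff using vs
    by (simp add: rho_lb2 lin_add[OF linA] lin_add[OF linB] lin_scale[OF linA] lin_scale[OF linB]
        scale_right_distrib algebra_simps)
qed

lemma Yx: "act z1' x = lc x (s1 * s2) 0 0 (- ic)"
proof -
  have "sc (s1 + s2) (act z1' x) + act phi1 (act phi0 x) = sc (s1 * s2 * (s1 + s2)) x"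
    using ZY[of x] by (simp add: Zs Qs)
  then have "sc (s1 + s2) (act z1' x) = sc (s1 * s2 * (s1 + s2)) x - act phi1 (act phi0 x)"
    by (simp add: eq_diff_eq)
  then have "sc ic (sc (s1 + s2) (act z1' x)) = sc ic (sc (s1 * s2 * (s1 + s2)) x - act phi1 (act phi0 x))"
    by simp
  moreover have "sc ic (sc (s1 + s2) (act z1' x)) = act z1' x" using ic by simp
  ultimately have "act z1' x = sc (ic * (s1 * s2 * (s1 + s2))) x - sc ic (act phi1 (act phi0 x))"
    by (simp add: scale_right_diff_distrib)
  also have "ic * (s1 * s2 * (s1 + s2)) = s1 * s2" using ic by algebra
  finally show ?thesis by (simp add: lc_def)
qed

lemma rho_phi0: "rho phi0 y = A y + B y" by (simp add: phi0_eq rho_lb2)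
lemma rho_phi1: "rho phi1 y = sc s2 (A y) + sc (- s1) (B y)" by (simp add: phi1_eq rho_lb2)
lemma rho_z1': "rho z1' y = sc (s1 * s2) y + sc (-1) (A (B y))" by (simp add: z1'_eq rho_lb2)

lemma rho_W2: "u \<in> W2 \<Longrightarrow> rho u x = act u x"
proof (induct u arbitrary: x rule: W2.induct)
  case W2_one then show ?case by (simp add: rho_one a_one)
next
  case W2_phi0
  have "rho phi0 (lc x 1 0 0 0) = act phi0 (lc x 1 0 0 0)"
    unfolding rho_phi0 A_def B_def
    apply (simp only: lc_P0 lc_P1 lc_add lc_scale ev_simps scale_zero_left scale_one add_0_left add_0_right)
    apply (rule lc_cong)
    apply (simp_all only: icdef)
    apply ((simp add: algebra_simps; fail) | (use ic in algebra))+
    done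
  then show ?case by (simp only: lc_x)
next
  case W2_phi1
  have "rho phi1 (lc x 1 0 0 0) = act phi1 (lc x 1 0 0 0)"
    unfolding rho_phi1 A_def B_def
    apply (simp only: lc_P0 lc_P1 lc_add lc_scale ev_simps scale_zero_left scale_one add_0_left add_0_right)
    apply (rule lc_cong)
    apply (simp_all only: icdef)
    apply ((simp add: algebra_simps; fail) | (use ic in algebra))+
    done
  then show ?case by (simp only: lc_x)
next
  case W2_z0
  have "rho z0 x = sc (s1 + s2) x" by (simp add: z0_eq rho_lb2)
  then show ?case by (simp add: Zs)
next
  case W2_z1'
  have "rho z1' (lc x 1 0 0 0) = lc x (s1 * s2) 0 0 (- ic)"
    unfolding rho_z1' A_def B_def
    apply (simp only: lc_P0 lc_P1 lc_add lc_scale ev_simps scale_zero_left scale_one add_0_left add_0_right)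
    apply (rule lc_cong)
    apply (simp_all only: icdef)
    apply ((simp add: algebra_simps; fail) | (use ic in algebra))+
    done
  then show ?case by (simp only: lc_x Yx)
next
  case (W2_add u w) then show ?case by (simp add: rho_add a_add)
next
  case (W2_smul u k) then show ?case by (simp add: rho_smul a_smul)
next
  case (W2_mult u w) then show ?case by (simp add: rho_mult a_mult)
qed


lemma P0_0: "y \<in> V0 \<Longrightarrow> act phi0 y \<in> V1" by (rule a_odd0) (simp_all add: W2.intros od_phi0)
lemma P0_1: "y \<in> V1 \<Longrightarrow> act phi0 y \<in> V0" by (rule a_odd1) (simp_all add: W2.intros od_phi0)
lemma P1_0: "y \<in> V0 \<Longrightarrow> act phi1 y \<in> V1" by (rule a_odd0) (simp_all add: W2.intros od_phi1)
lemma P1_1: "y \<in> V1 \<Longrightarrow> act phi1 y \<in> V0" by (rule a_odd1) (simp_all add: W2.intros od_phi1)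
lemma A_0: "y \<in> V0 \<Longrightarrow> A y \<in> V1"
  unfolding A_def using sub1 P0_0 P1_0 by (simp add: subspace_add subspace_scale)
lemma A_1: "y \<in> V1 \<Longrightarrow> A y \<in> V0"
  unfolding A_def using sub0 P0_1 P1_1 by (simp add: subspace_add subspace_scale)
lemma B_0: "y \<in> V0 \<Longrightarrow> B y \<in> V1"
  unfolding B_def using sub1 P0_0 P1_0 by (simp add: subspace_diff subspace_scale)
lemma B_1: "y \<in> V1 \<Longrightarrow> B y \<in> V0"
  unfolding B_def using sub0 P0_1 P1_1 by (simp add: subspace_diff subspace_scale)

lemma rho_even: "U_even u \<Longrightarrow> (y \<in> V0 \<longrightarrow> rho u y \<in> V0) \<and> (y \<in> V1 \<longrightarrow> rho u y \<in> V1)"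
  by (cases u) (simp add: rho_lb2 A_0 A_1 B_0 B_1 sub0 sub1 subspace_add subspace_scale)
lemma rho_odd: "U_odd u \<Longrightarrow> (y \<in> V0 \<longrightarrow> rho u y \<in> V1) \<and> (y \<in> V1 \<longrightarrow> rho u y \<in> V0)"
  by (cases u) (simp add: rho_lb2 A_0 A_1 B_0 B_1 sub0 sub1 subspace_add subspace_scale)

lemma caseN: "\<exists>M0 M1 \<rho>. simple_module UNIV sc M0 M1 \<rho> \<and>
                 \<rho> x1 = sc s1 \<and> \<rho> x2 = sc s2 \<and>
                 module_iso W2 sc V0 V1 act sc M0 M1 \<rho>"
proof -
  have gmr: "graded_module UNIV sc V0 V1 rho"
    unfolding graded_module_def
  proof (intro conjI ballI allI impI)
    show "vector_space sc" by (rule vs)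
    show "grading sc V0 V1" by (rule grad)
    show "Vector_Spaces.linear sc sc (rho u)" for u by (rule rho_lin)
    show "rho (U_add u w) = (\<lambda>x. rho u x + rho w x)" for u w by (simp add: fun_eq_iff rho_add)
    show "rho (U_smul k u) = (\<lambda>x. sc k (rho u x))" for k u by (simp add: fun_eq_iff rho_smul)
    show "rho (U_mult u w) = rho u \<circ> rho w" for u w by (simp add: fun_eq_iff rho_mult)
    show "rho U_one = id" by (simp add: fun_eq_iff rho_one)
    show "rho u ` V0 \<subseteq> V0" "rho u ` V1 \<subseteq> V1" if "U_even u" for u using rho_even[OF that] by auto
    show "rho u ` V0 \<subseteq> V1" "rho u ` V1 \<subseteq> V0" if "U_odd u" for u using rho_odd[OF that] by auto
  qed
  have smr: "simple_module UNIV sc V0 V1 rho"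
    unfolding simple_module_def
  proof (intro conjI allI impI)
    show "graded_module UNIV sc V0 V1 rho" by (rule gmr)
    show "\<exists>x::'v. x \<noteq> 0" by (rule nz)
    fix S assume "graded_submodule UNIV sc V0 V1 rho S"
    then have "graded_submodule W2 sc V0 V1 act S"
      unfolding graded_submodule_def using rho_W2 by (metis UNIV_I image_cong)
    then show "S = {0} \<or> S = UNIV" by (rule simp_sub)
  qed
  have r1: "rho x1 = sc s1" by (simp add: fun_eq_iff x1_eq rho_lb2)
  have r2: "rho x2 = sc s2" by (simp add: fun_eq_iff x2_eq rho_lb2)
  have iso: "module_iso W2 sc V0 V1 act sc V0 V1 rho"
    unfolding module_iso_def
  proof (intro exI[of _ id] conjI ballI allI)
    show "bij (id :: 'v \<Rightarrow> 'v)" by simp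
    show "Vector_Spaces.linear sc sc (id :: 'v \<Rightarrow> 'v)" unfolding Vector_Spaces.linear_iff using vs by simp
    show "id ` V0 = V0" "id ` V1 = V1" by simp_all
    show "id (act u x) = rho u (id x)" if "u \<in> W2" for u x using rho_W2[OF that] by simp
  qed
  show ?thesis using smr r1 r2 iso by blast
qed


end

theorem lemma4p3:
  fixes sc :: "complex \<Rightarrow> 'v::ab_group_add \<Rightarrow> 'v"
    and V0 V1 :: "'v set"
    and act :: "U \<Rightarrow> 'v \<Rightarrow> 'v"
  assumes "simple_module W2 sc V0 V1 act"
  shows "(\<exists>s1 s2 :: complex.
            ((s1 \<noteq> - s2 \<and> s1 \<noteq> 0 \<and> s2 \<noteq> 0) \<or> (s1 \<noteq> 0 \<and> s2 = 0)) \<and>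
            (\<exists>M0 M1 \<rho>. simple_module UNIV sc M0 M1 \<rho> \<and>
                 \<rho> x1 = sc s1 \<and> \<rho> x2 = sc s2 \<and>
                 module_iso W2 sc V0 V1 act sc M0 M1 \<rho>))
       \<or> (\<exists>t :: complex. \<exists>(G0, G1) \<in> {(UNIV, {0}), ({0}, UNIV)}. \<exists>\<gamma>.
            graded_module W2 ((*) :: complex \<Rightarrow> complex \<Rightarrow> complex) G0 G1 \<gamma> \<and>
            \<gamma> phi0 = (\<lambda>z. 0) \<and> \<gamma> phi1 = (\<lambda>z. 0) \<and> \<gamma> z0 = (\<lambda>z. 0) \<and>
            \<gamma> z1' = (\<lambda>z. t * z) \<and>
            module_iso W2 sc V0 V1 act (*) G0 G1 \<gamma>)"
proof -
  interpret sm sc V0 V1 act by unfold_locales (rule assms)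
  obtain cc where Z: "\<And>x. act z0 x = sc cc x"
    using scalar[OF W2.W2_z0 ev_z0 z0_comm] by blast
  show ?thesis
  proof (cases "cc = 0")
    case True
    then have "\<And>x. act z0 x = 0" using Z by simp
    then show ?thesis using case0 by blast
  next
    case False
    obtain q where Q: "\<And>x. act Qc x = sc q x"
      using scalar[OF W2_Qc ev_Qc Qc_comm] by blast
    define d where "d = q / cc"
    obtain s1 s2 where s: "s1 + s2 = cc" "s1 * s2 = d"
      and cond: "(s1 \<noteq> - s2 \<and> s1 \<noteq> 0 \<and> s2 \<noteq> 0) \<or> (s1 \<noteq> 0 \<and> s2 = 0)"
    proof (cases "d = 0")
      case True
      show ?thesis by (rule that[of cc 0]) (use True False in auto)
    next
      case dnz: False
      define r where "r = csqrt (cc^2 - 4 * d)"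
      have r2: "r^2 = cc^2 - 4 * d" unfolding r_def by simp
      have sum: "(cc + r) / 2 + (cc - r) / 2 = cc" by (simp add: field_simps)
      have prod: "(cc + r) / 2 * ((cc - r) / 2) = d"
        using r2 by (simp add: field_simps power2_eq_square)
      show ?thesis
      proof (rule that[OF sum prod])
        have "(cc + r) / 2 \<noteq> 0" "(cc - r) / 2 \<noteq> 0" using prod dnz by auto
        moreover have "(cc + r) / 2 \<noteq> - ((cc - r) / 2)" using sum False by (metis add_eq_0_iff2)
        ultimately show "((cc + r) / 2 \<noteq> - ((cc - r) / 2) \<and> (cc + r) / 2 \<noteq> 0 \<and> (cc - r) / 2 \<noteq> 0) \<or>
          ((cc + r) / 2 \<noteq> 0 \<and> (cc - r) / 2 = 0)" by blast
      qed
    qed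
    have q: "q = s1 * s2 * (s1 + s2)" using s False unfolding d_def by simp
    interpret r: rl sc V0 V1 act s1 s2
      by unfold_locales (simp_all add: assms Z Q s q False)
    show ?thesis using r.caseN cond by blast
  qed
qed

end
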